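(* Let $\Sigma$ be a connected orientable compact surface with $n$ boundary components $\{1,\dots,n\}$, $T$ an ideal triangulation with edges $E$ and faces $F$, and $l^0\in\mathbb{R}_{>0}^{|E|}$ a hyperbolic metric on $(\Sigma,T)$. Consider the combinatorial Yamabe flow $$\frac{dw_i(t)}{dt}=B_i(t),\qquad w_i(0)=0,\qquad i=1,\dots,n,$$ where $B_i(t)$ is the length of boundary component $i$ of the hyperbolic metric determined by $w(t)$ via $\cosh\frac{l_{ij}}{2}=e^{w_i+w_j}\cosh\frac{l^0_{ij}}{2}$. Then this flow is the gradient flow of a concave function of $w$ (defined on the set $\mathcal{W}$ of $w$ for which all $l_{ij}>0$), and $\sum_{i=1}^n B_i(t)^2$ is decreasing in $t$.
   Context: An ideal triangulation: glue finitely many hexagons, each with three pairwise non-adjacent sides colored red, along red sides in pairs; faces are the images of hexagons, edges the images of red sides, boundary arcs the images of the other sides. Each edge joins boundary components $i,j$ and is denoted $ij$; each face meets boundary components $i,j,k$ and is denoted $ijk$. A hyperbolic metric is a vector $l\in\mathbb{R}_{>0}^{|E|}$; each face $ijk$ is realized as the unique hyperbolic right-angled hexagon with pairwise non-adjacent sides of lengths $l_{jk},l_{ki},l_{ij}$, and $\theta^i_{jk}$ is the length of the side on boundary component $i$ (opposite to $jk$). Then $B_i=\sum_{ijk\in F}\theta^i_{jk}$. *)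

theory Defs
  imports "HOL-Analysis.Analysis"
begin

text \<open>Boundary components are the elements of a finite type 'v (so n = CARD('v)).
  E is the (finite) set of edges, F the (finite) set of faces.
  ep e = (i,j) gives the two boundary components joined by edge e (i = j allowed).
  For a face f, its corners a in {0,1,2} lie on boundary components fv f a, and
  fe f a is the edge (red side) of f opposite to corner a, i.e. joining
  fv f ((a+1) mod 3) and fv f ((a+2) mod 3).\<close>

definition ideal_triangulation ::
  "'e set \<Rightarrow> 'f set \<Rightarrow> ('e \<Rightarrow> 'v \<times> 'v) \<Rightarrow> ('f \<Rightarrow> nat \<Rightarrow> 'v) \<Rightarrow> ('f \<Rightarrow> nat \<Rightarrow> 'e) \<Rightarrow> bool"
where
  "ideal_triangulation E F ep fv fe \<longleftrightarrow>
     finite E \<and> finite F \<and> F \<noteq> {} \<and>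
     (\<forall>f\<in>F. \<forall>a<3. fe f a \<in> E \<and>
        {fst (ep (fe f a)), snd (ep (fe f a))} = {fv f ((a+1) mod 3), fv f ((a+2) mod 3)}) \<and>
     (\<forall>e\<in>E. card {(f,a). f \<in> F \<and> a < 3 \<and> fe f a = e} = 2) \<and>
     (\<forall>v. \<exists>f\<in>F. \<exists>a<3. fv f a = v)"

text \<open>Right-angled hyperbolic hexagon with pairwise non-adjacent sides of lengths a, b, c:
  length of the side opposite to the side of length a (cosine law).\<close>
definition hex_opp :: "real \<Rightarrow> real \<Rightarrow> real \<Rightarrow> real" where
  "hex_opp a b c = arcosh ((cosh b * cosh c + cosh a) / (sinh b * sinh c))"

definition conf_len :: "('e \<Rightarrow> 'v \<times> 'v) \<Rightarrow> ('e \<Rightarrow> real) \<Rightarrow> real^'v \<Rightarrow> 'e \<Rightarrow> real" where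
  "conf_len ep l0 w e =
     2 * arcosh (exp (w $ fst (ep e) + w $ snd (ep e)) * cosh (l0 e / 2))"

text \<open>The admissible set: all l_ij > 0, i.e. cosh(l_ij/2) > 1.\<close>
definition adm_set :: "'e set \<Rightarrow> ('e \<Rightarrow> 'v \<times> 'v) \<Rightarrow> ('e \<Rightarrow> real) \<Rightarrow> (real^'v) set" where
  "adm_set E ep l0 =
     {w. \<forall>e\<in>E. exp (w $ fst (ep e) + w $ snd (ep e)) * cosh (l0 e / 2) > 1}"

definition face_theta :: "('f \<Rightarrow> nat \<Rightarrow> 'e) \<Rightarrow> ('e \<Rightarrow> real) \<Rightarrow> 'f \<Rightarrow> nat \<Rightarrow> real" where
  "face_theta fe l f a =
     hex_opp (l (fe f a)) (l (fe f ((a+1) mod 3))) (l (fe f ((a+2) mod 3)))"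

definition bdry_len ::
  "'f set \<Rightarrow> ('f \<Rightarrow> nat \<Rightarrow> 'v) \<Rightarrow> ('f \<Rightarrow> nat \<Rightarrow> 'e) \<Rightarrow> ('e \<Rightarrow> real) \<Rightarrow> 'v \<Rightarrow> real" where
  "bdry_len F fv fe l i =
     (\<Sum>f\<in>F. \<Sum>a\<in>{a. a < 3 \<and> fv f a = i}. face_theta fe l f a)"

definition Bvec ::
  "'f set \<Rightarrow> ('e \<Rightarrow> 'v \<times> 'v) \<Rightarrow> ('f \<Rightarrow> nat \<Rightarrow> 'v) \<Rightarrow> ('f \<Rightarrow> nat \<Rightarrow> 'e) \<Rightarrow> ('e \<Rightarrow> real)
     \<Rightarrow> real^'v \<Rightarrow> real^'v" where
  "Bvec F ep fv fe l0 w = (\<chi> i. bdry_len F fv fe (conf_len ep l0 w) i)"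

end

theory Submission
  imports Defs
begin

definition Dl :: "real \<Rightarrow> real \<Rightarrow> real \<Rightarrow> real" where
  "Dl a b c = a^2 + b^2 + c^2 + 2*a*b*c - 1"

definition hth :: "real \<Rightarrow> real \<Rightarrow> real \<Rightarrow> real" where
  "hth a b c = arcosh ((b*c+a)/(sqrt (b^2-1) * sqrt (c^2-1)))"

lemma Dl_pos: "a > 1 \<Longrightarrow> b > 1 \<Longrightarrow> c > 1 \<Longrightarrow> Dl a b c > 0"
proof -
  assume "a > 1" "b > 1" "c > 1"
  then have "a*b*c > 0" "a^2 > 0" "b^2 > 1" "c^2 > 0" by (auto simp: one_less_power)
  then show ?thesis unfolding Dl_def by linarith
qed

lemma hth_arg:
  assumes "a > 1" "b > 1" "c > 1"
  shows "((b*c+a)/(sqrt (b^2-1) * sqrt (c^2-1)))^2 - 1 = Dl a b c / ((b^2-1)*(c^2-1))"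
    "(b*c+a)/(sqrt (b^2-1) * sqrt (c^2-1)) > 1"
proof -
  have b1: "b^2 - 1 > 0" using assms by (simp add: one_less_power)
  have b2: "c^2 - 1 > 0" using assms by (simp add: one_less_power)
  have sq: "((b*c+a)/(sqrt (b^2-1) * sqrt (c^2-1)))^2 = (b*c+a)^2/((b^2-1)*(c^2-1))"
    using b1 b2 by (simp add: power_divide power_mult_distrib)
  have "(b*c+a)^2/((b^2-1)*(c^2-1)) - 1 = ((b*c+a)^2 - (b^2-1)*(c^2-1))/((b^2-1)*(c^2-1))"
    using b1 b2 by (simp add: diff_divide_distrib)
  also have "(b*c+a)^2 - (b^2-1)*(c^2-1) = Dl a b c" unfolding Dl_def by (simp add: power2_eq_square algebra_simps)
  finally show 1: "((b*c+a)/(sqrt (b^2-1) * sqrt (c^2-1)))^2 - 1 = Dl a b c / ((b^2-1)*(c^2-1))"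
    using sq by simp
  have "((b*c+a)/(sqrt (b^2-1) * sqrt (c^2-1)))^2 > 1"
  proof -
    have "Dl a b c / ((b^2-1)*(c^2-1)) > 0" using Dl_pos[OF assms] b1 b2 by simp
    then show ?thesis using 1 by linarith
  qed
  moreover have "(b*c+a)/(sqrt (b^2-1) * sqrt (c^2-1)) > 0"
  proof (rule divide_pos_pos)
    show "b*c+a > 0" using assms by (simp add: add_pos_pos)
    show "sqrt (b^2-1) * sqrt (c^2-1) > 0" using b1 b2 by simp
  qed
  ultimately show "(b*c+a)/(sqrt (b^2-1) * sqrt (c^2-1)) > 1"
    by (metis abs_of_pos less_le one_less_power one_power2 power2_less_imp_less zero_le_one)
qed

lemma sqrt_deriv:
  fixes Y :: "'a::real_normed_vector \<Rightarrow> real"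
  assumes d: "(Y has_derivative Y') (at w)" and g: "Y w > 1"
  shows "((\<lambda>x. sqrt ((Y x)^2 - 1)) has_derivative (\<lambda>h. Y w * Y' h / sqrt ((Y w)^2 - 1))) (at w)"
proof -
  have p: "(Y w)^2 - 1 > 0" using g by (simp add: one_less_power)
  have d2: "((\<lambda>x. (Y x)^2 - 1) has_derivative (\<lambda>h. 2 * Y w * Y' h)) (at w)"
    using has_derivative_diff[OF has_derivative_power[OF d, of 2] has_derivative_const[of 1]]
    by (simp add: ac_simps)
  have "((\<lambda>x. sqrt ((Y x)^2 - 1)) has_derivative (\<lambda>h. 2 * Y w * Y' h * (inverse (sqrt ((Y w)^2 - 1)) / 2))) (at w)"
    by (rule DERIV_compose_FDERIV[OF DERIV_real_sqrt[OF p] d2])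
  then show ?thesis by (simp add: field_simps)
qed

lemma alg1:
  fixes a b c s1 s2 R y0 y1 y2 :: real
  assumes "s1 > 0" "s2 > 0" "R > 0" "s1 * s1 = b^2-1" "s2 * s2 = c^2-1"
  shows "(- (b * c + a) * (inverse (s1 * s2) * (s1 * (c * y2 / s2) + b * y1 / s1 * s2) * inverse (s1 * s2))
      + (b * y2 + y1 * c + y0) / (s1 * s2)) * (1 / (R / (s1 * s2)))
    = (y0 - (c + a*b)/(b^2-1) * y1 - (b + a*c)/(c^2-1) * y2) / R"
proof -
  have e1: "b^2-1 = s1 * s1" "c^2-1 = s2 * s2" using assms by auto
  show ?thesis unfolding e1 using assms(1-3)
    apply (simp add: field_simps)
    using assms(4,5) by algebra
qed

lemma hth_deriv:
  fixes Y0 Y1 Y2 :: "'a::real_normed_vector \<Rightarrow> real"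
  assumes d0: "(Y0 has_derivative Y0') (at w)" and d1: "(Y1 has_derivative Y1') (at w)"
    and d2: "(Y2 has_derivative Y2') (at w)"
    and g0: "Y0 w > 1" and g1: "Y1 w > 1" and g2: "Y2 w > 1"
  shows "((\<lambda>w. hth (Y0 w) (Y1 w) (Y2 w)) has_derivative
     (\<lambda>h. (Y0' h - (Y2 w + Y0 w * Y1 w)/((Y1 w)^2-1) * Y1' h
               - (Y1 w + Y0 w * Y2 w)/((Y2 w)^2-1) * Y2' h) / sqrt (Dl (Y0 w) (Y1 w) (Y2 w)))) (at w)"
proof -
  let ?a = "Y0 w" and ?b = "Y1 w" and ?c = "Y2 w"
  have p1: "?b^2 - 1 > 0" using g1 by (simp add: one_less_power)
  have p2: "?c^2 - 1 > 0" using g2 by (simp add: one_less_power)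
  have dpos: "Dl ?a ?b ?c > 0" by (rule Dl_pos[OF g0 g1 g2])
  have sz: "sqrt (((?b*?c+?a)/(sqrt (?b^2-1) * sqrt (?c^2-1)))^2 - 1)
       = sqrt (Dl ?a ?b ?c) / (sqrt (?b^2-1) * sqrt (?c^2-1))"
    using p1 p2 by (simp add: hth_arg(1)[OF g0 g1 g2] real_sqrt_divide real_sqrt_mult)
  have s1: "sqrt (?b^2-1) * sqrt (?b^2-1) = ?b^2 - 1" using p1 by simp
  have s2: "sqrt (?c^2-1) * sqrt (?c^2-1) = ?c^2 - 1" using p2 by simp
  have q1: "sqrt (?b^2-1) > 0" "sqrt (?c^2-1) > 0" "sqrt (Dl ?a ?b ?c) > 0" using p1 p2 dpos by auto
  show ?thesis
    unfolding hth_def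
    apply (rule has_derivative_eq_rhs)
     apply (rule DERIV_compose_FDERIV[OF arcosh_real_has_field_derivative])
      apply (rule hth_arg(2)[OF g0 g1 g2])
     apply (rule sqrt_deriv[OF d1 g1] sqrt_deriv[OF d2 g2] derivative_eq_intros refl d0 d1 d2)+
    using q1 apply simp
    apply (rule refl)
    unfolding sz
    apply (rule ext)
    apply (rule alg1[OF q1 s1 s2])
    done
qed

lemma mono_from_nsd:
  fixes G :: "'a::real_inner \<Rightarrow> 'a"
  assumes cS: "convex S"
    and D: "\<And>x. x \<in> S \<Longrightarrow> (G has_derivative DG x) (at x)"
    and N: "\<And>x h. x \<in> S \<Longrightarrow> DG x h \<bullet> h \<le> 0"
    and xS: "x \<in> S" and yS: "y \<in> S"
  shows "(G x - G y) \<bullet> (x - y) \<le> 0"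
proof -
  define k where "k t = G (y + t *\<^sub>R (x - y)) \<bullet> (x - y)" for t :: real
  have pS: "y + t *\<^sub>R (x - y) \<in> S" if "0 \<le> t" "t \<le> 1" for t
  proof -
    have "y + t *\<^sub>R (x - y) = (1 - t) *\<^sub>R y + t *\<^sub>R x" by (simp add: algebra_simps)
    then show ?thesis using convexD[OF cS yS xS, of "1-t" t] that by simp
  qed
  have kd: "(k has_derivative (\<lambda>s. DG (y + t *\<^sub>R (x - y)) (s *\<^sub>R (x - y)) \<bullet> (x - y))) (at t within {0..1})"
    if "0 \<le> t" "t \<le> 1" for t
  proof -
    have l: "((\<lambda>t. y + t *\<^sub>R (x - y)) has_derivative (\<lambda>s. s *\<^sub>R (x - y))) (at t within {0..1})"
      by (auto intro!: derivative_eq_intros)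
    have "((\<lambda>t. G (y + t *\<^sub>R (x - y))) has_derivative (\<lambda>s. DG (y + t *\<^sub>R (x - y)) (s *\<^sub>R (x - y)))) (at t within {0..1})"
      by (rule has_derivative_compose[OF l D[OF pS[OF that]]])
    then show ?thesis unfolding k_def
      by (auto intro!: derivative_eq_intros)
  qed
  obtain t where t: "t \<in> {0..1}" and eq: "k 1 - k 0 = DG (y + t *\<^sub>R (x - y)) ((1 - 0) *\<^sub>R (x - y)) \<bullet> (x - y)"
    using mvt_very_simple[of 0 1 k, OF _ kd] by auto
  have "k 1 - k 0 \<le> 0" using eq N[OF pS] t by auto
  then show ?thesis unfolding k_def by (simp add: inner_diff_left)
qed

lemma concave_from_grad:
  fixes \<Phi> :: "'a::real_inner \<Rightarrow> real"
  assumes cS: "convex S"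
    and D: "\<And>x. x \<in> S \<Longrightarrow> (\<Phi> has_derivative (\<lambda>h. G x \<bullet> h)) (at x)"
    and M: "\<And>x y. x \<in> S \<Longrightarrow> y \<in> S \<Longrightarrow> (G x - G y) \<bullet> (x - y) \<le> 0"
  shows "concave_on S \<Phi>"
proof -
  have tang: "\<Phi> z \<le> \<Phi> y + G y \<bullet> (z - y)" if yS: "y \<in> S" and zS: "z \<in> S" for y z
  proof -
    define k where "k t = \<Phi> (y + t *\<^sub>R (z - y)) - t * (G y \<bullet> (z - y))" for t :: real
    have pS: "y + t *\<^sub>R (z - y) \<in> S" if "0 \<le> t" "t \<le> 1" for t
    proof -
      have "y + t *\<^sub>R (z - y) = (1 - t) *\<^sub>R y + t *\<^sub>R z" by (simp add: algebra_simps)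
      then show ?thesis using convexD[OF cS yS zS, of "1-t" t] that by simp
    qed
    have kd: "(k has_derivative (\<lambda>s. G (y + t *\<^sub>R (z - y)) \<bullet> (s *\<^sub>R (z - y)) - s * (G y \<bullet> (z - y)))) (at t within {0..1})"
      if "0 \<le> t" "t \<le> 1" for t
    proof -
      have l: "((\<lambda>t. y + t *\<^sub>R (z - y)) has_derivative (\<lambda>s. s *\<^sub>R (z - y))) (at t within {0..1})"
        by (auto intro!: derivative_eq_intros)
      have "((\<lambda>t. \<Phi> (y + t *\<^sub>R (z - y))) has_derivative (\<lambda>s. G (y + t *\<^sub>R (z - y)) \<bullet> (s *\<^sub>R (z - y)))) (at t within {0..1})"
        by (rule has_derivative_compose[OF l D[OF pS[OF that]]])
      then show ?thesis unfolding k_def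
        by (auto intro!: derivative_eq_intros)
    qed
    obtain t where t: "t \<in> {0..1}" and eq: "k 1 - k 0 = G (y + t *\<^sub>R (z - y)) \<bullet> ((1 - 0) *\<^sub>R (z - y)) - (1 - 0) * (G y \<bullet> (z - y))"
      using mvt_very_simple[of 0 1 k, OF _ kd] by auto
    have "(G (y + t *\<^sub>R (z - y)) - G y) \<bullet> ((y + t *\<^sub>R (z - y)) - y) \<le> 0"
      using M[OF pS yS] t by auto
    then have "t * ((G (y + t *\<^sub>R (z - y)) - G y) \<bullet> (z - y)) \<le> 0" by simp
    moreover have "t = 0 \<or> t > 0" using t by auto
    ultimately have "(G (y + t *\<^sub>R (z - y)) - G y) \<bullet> (z - y) \<le> 0 \<or> t = 0"
      by (auto simp: mult_le_0_iff)
    then have "k 1 - k 0 \<le> 0" using eq by (auto simp: inner_diff_left)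
    then show ?thesis unfolding k_def by simp
  qed
  show ?thesis unfolding concave_on_iff
  proof (intro conjI cS ballI allI impI)
    fix x y and u v :: real
    assume xS: "x \<in> S" and yS: "y \<in> S" and u: "0 \<le> u" and v: "0 \<le> v" and uv: "u + v = 1"
    let ?p = "u *\<^sub>R x + v *\<^sub>R y"
    have pS: "?p \<in> S" using convexD[OF cS xS yS u v uv] .
    have 1: "u * \<Phi> x \<le> u * (\<Phi> ?p + G ?p \<bullet> (x - ?p))" using tang[OF pS xS] u by (rule mult_left_mono)
    have 2: "v * \<Phi> y \<le> v * (\<Phi> ?p + G ?p \<bullet> (y - ?p))" using tang[OF pS yS] v by (rule mult_left_mono)
    have "u * (G ?p \<bullet> (x - ?p)) + v * (G ?p \<bullet> (y - ?p)) = G ?p \<bullet> (u *\<^sub>R (x - ?p) + v *\<^sub>R (y - ?p))"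
      by (simp add: inner_add_right)
    also have "u *\<^sub>R (x - ?p) + v *\<^sub>R (y - ?p) = ?p - (u + v) *\<^sub>R ?p"
      by (simp add: algebra_simps)
    also have "\<dots> = 0" using uv by simp
    finally have 3: "u * (G ?p \<bullet> (x - ?p)) + v * (G ?p \<bullet> (y - ?p)) = 0" by simp
    have 4: "u * (\<Phi> ?p + G ?p \<bullet> (x - ?p)) + v * (\<Phi> ?p + G ?p \<bullet> (y - ?p))
        = (u + v) * \<Phi> ?p + (u * (G ?p \<bullet> (x - ?p)) + v * (G ?p \<bullet> (y - ?p)))"
      by (simp add: algebra_simps)
    show "u * \<Phi> x + v * \<Phi> y \<le> \<Phi> ?p"
      using 1 2 4 unfolding 3 uv by simp
  qed
qed

lemma flow_decr:
  fixes G :: "'a::real_inner \<Rightarrow> 'a" and wt :: "real \<Rightarrow> 'a"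
  assumes D: "\<And>x. x \<in> S \<Longrightarrow> (G has_derivative DG x) (at x)"
    and N: "\<And>x h. x \<in> S \<Longrightarrow> DG x h \<bullet> h \<le> 0"
    and J: "is_interval J"
    and W: "\<forall>t\<in>J. wt t \<in> S \<and> (wt has_vector_derivative G (wt t)) (at t within J)"
    and s: "s \<in> J" and t: "t \<in> J" and st: "s \<le> t"
  shows "G (wt t) \<bullet> G (wt t) \<le> G (wt s) \<bullet> G (wt s)"
proof -
  define g where "g u = G (wt u) \<bullet> G (wt u)" for u
  have sub: "{s..t} \<subseteq> J"
  proof
    fix x assume x: "x \<in> {s..t}"
    show "x \<in> J" by (rule mem_is_interval_1_I[OF J s t]) (use x in auto)
  qed
  have gd: "(g has_derivative (\<lambda>r. G (wt u) \<bullet> DG (wt u) (r *\<^sub>R G (wt u)) + DG (wt u) (r *\<^sub>R G (wt u)) \<bullet> G (wt u))) (at u within {s..t})"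
    if "s \<le> u" "u \<le> t" for u
  proof -
    have uJ: "u \<in> J" using sub that by auto
    have l: "(wt has_derivative (\<lambda>r. r *\<^sub>R G (wt u))) (at u within {s..t})"
      using has_derivative_subset[OF W[rule_format, OF uJ, THEN conjunct2, unfolded has_vector_derivative_def] sub] .
    have wS: "wt u \<in> S" using W uJ by blast
    have "((\<lambda>u. G (wt u)) has_derivative (\<lambda>r. DG (wt u) (r *\<^sub>R G (wt u)))) (at u within {s..t})"
      by (rule has_derivative_compose[OF l D[OF wS]])
    from has_derivative_inner[OF this this] show ?thesis unfolding g_def .
  qed
  obtain u where u: "u \<in> {s..t}" and eq: "g t - g s = G (wt u) \<bullet> DG (wt u) ((t - s) *\<^sub>R G (wt u)) + DG (wt u) ((t - s) *\<^sub>R G (wt u)) \<bullet> G (wt u)"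
    using mvt_very_simple[OF st gd] by auto
  have wS: "wt u \<in> S" using W u sub by auto
  interpret bl: bounded_linear "DG (wt u)" using D[OF wS] by (rule has_derivative_bounded_linear)
  have "g t - g s = 2 * (t - s) * (DG (wt u) (G (wt u)) \<bullet> G (wt u))"
    unfolding eq bl.scale by (simp add: inner_commute)
  also have "\<dots> \<le> 0" using N[OF wS, of "G (wt u)"] st by (simp add: mult_nonneg_nonpos)
  finally show ?thesis unfolding g_def by simp
qed

lemma potential_exists:
  fixes G :: "'a::euclidean_space \<Rightarrow> 'a" and DG :: "'a \<Rightarrow> 'a \<Rightarrow>\<^sub>L 'a"
  assumes oS: "open S" and cS: "convex S" and x0: "x0 \<in> S"
    and D: "\<And>x. x \<in> S \<Longrightarrow> (G has_derivative blinfun_apply (DG x)) (at x)"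
    and C: "continuous_on S DG"
    and Sym: "\<And>x h k. x \<in> S \<Longrightarrow> DG x h \<bullet> k = DG x k \<bullet> h"
  shows "\<exists>\<Phi>. \<forall>x\<in>S. (\<Phi> has_derivative (\<lambda>h. G x \<bullet> h)) (at x)"
proof -
  define y where "y x t = x0 + t *\<^sub>R (x - x0)" for x and t :: real
  define f where "f x t = G (y x t) \<bullet> (x - x0)" for x t
  define fx where "fx x t = t *\<^sub>R (blinfun_inner_left (x - x0) o\<^sub>L DG (y x t)) + blinfun_inner_left (G (y x t))" for x t
  have yS: "y x t \<in> S" if "x \<in> S" "t \<in> cbox 0 1" for x t
  proof -
    have "y x t = (1 - t) *\<^sub>R x0 + t *\<^sub>R x" by (simp add: y_def algebra_simps)
    then show ?thesis using convexD[OF cS x0 that(1), of "1-t" t] that by simp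
  qed
  have Gc: "continuous_on S G"
    using D by (meson continuous_at_imp_continuous_on has_derivative_continuous)
  have yc: "continuous_on (S \<times> cbox 0 1) (\<lambda>(x, t). y x t)"
    unfolding y_def by (auto intro!: continuous_intros simp: split_beta)
  have ySp: "(\<lambda>(x, t). y x t) ` (S \<times> cbox 0 1) \<subseteq> S" using yS by auto
  have DGc: "continuous_on (S \<times> cbox 0 1) (\<lambda>(x, t). DG (y x t))"
    using continuous_on_compose2[OF C yc ySp] by (simp add: split_beta)
  have GGc: "continuous_on (S \<times> cbox 0 1) (\<lambda>(x, t). G (y x t))"
    using continuous_on_compose2[OF Gc yc ySp] by (simp add: split_beta)
  have fxc: "continuous_on (S \<times> cbox 0 1) (\<lambda>(x, t). fx x t)"
    unfolding fx_def split_beta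
    by (intro continuous_intros DGc[unfolded split_beta] GGc[unfolded split_beta])
  have fxd: "((\<lambda>x. f x t) has_derivative blinfun_apply (fx x t)) (at x within S)"
    if "x \<in> S" "t \<in> cbox 0 1" for x t
  proof -
    have l: "((\<lambda>x. y x t) has_derivative (\<lambda>h. t *\<^sub>R h)) (at x within S)"
      unfolding y_def by (auto intro!: derivative_eq_intros)
    have "((\<lambda>x. G (y x t)) has_derivative (\<lambda>h. DG (y x t) (t *\<^sub>R h))) (at x within S)"
      by (rule has_derivative_compose[OF l D[OF yS[OF that]]])
    then have "((\<lambda>x. f x t) has_derivative (\<lambda>h. DG (y x t) (t *\<^sub>R h) \<bullet> (x - x0) + G (y x t) \<bullet> h)) (at x within S)"
      unfolding f_def by (auto intro!: derivative_eq_intros)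
    then show ?thesis
      by (rule has_derivative_eq_rhs) (auto simp: fx_def fun_eq_iff blinfun.add_left blinfun.scaleR_left blinfun.scaleR_right inner_commute)
  qed
  have fint: "f x integrable_on cbox 0 1" if "x \<in> S" for x
  proof -
    have "continuous_on (cbox 0 1) (\<lambda>t. y x t)" unfolding y_def by (intro continuous_intros)
    moreover have "(\<lambda>t. y x t) ` cbox 0 1 \<subseteq> S" using yS that by auto
    ultimately have "continuous_on (cbox 0 1) (\<lambda>t. G (y x t))" by (rule continuous_on_compose2[OF Gc])
    then have "continuous_on (cbox 0 1) (f x)" unfolding f_def by (intro continuous_intros)
    then show ?thesis by (rule integrable_continuous)
  qed
  define \<Phi> where "\<Phi> x = integral (cbox 0 1) (f x)" for x
  have "(\<Phi> has_derivative (\<lambda>h. G x \<bullet> h)) (at x)" if xS: "x \<in> S" for x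
  proof -
    have L: "(\<Phi> has_derivative blinfun_apply (integral (cbox 0 1) (fx x))) (at x within S)"
      unfolding \<Phi>_def
      by (rule leibniz_rule[OF fxd fint fxc xS cS])
    have fxi: "fx x integrable_on cbox 0 1"
    proof -
      have "continuous_on (cbox 0 1) (\<lambda>t. (x, t))" by (intro continuous_intros)
      moreover have "(\<lambda>t. (x, t)) ` cbox 0 1 \<subseteq> S \<times> cbox 0 1" using xS by auto
      ultimately have "continuous_on (cbox 0 1) (\<lambda>t. (\<lambda>(x, t). fx x t) (x, t))"
        by (rule continuous_on_compose2[OF fxc])
      then have "continuous_on (cbox 0 1) (fx x)" by simp
      then show ?thesis by (rule integrable_continuous)
    qed
    have val: "blinfun_apply (integral (cbox 0 1) (fx x)) h = G x \<bullet> h" for h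
    proof -
      have "blinfun_apply (integral (cbox 0 1) (fx x)) h = integral (cbox 0 1) (\<lambda>t. fx x t h)"
        by (rule blinfun_apply_integral[OF fxi])
      also have "\<dots> = G x \<bullet> h"
      proof (rule integral_unique)
        define F where "F t = t * (G (y x t) \<bullet> h)" for t :: real
        have Fd: "(F has_vector_derivative fx x t h) (at t within {0..1})" if t: "t \<in> {0..1}" for t
        proof -
          have t': "t \<in> cbox 0 1" using t by simp
          have l: "((\<lambda>t. y x t) has_derivative (\<lambda>r. r *\<^sub>R (x - x0))) (at t within {0..1})"
            unfolding y_def by (auto intro!: derivative_eq_intros)
          have "((\<lambda>t. G (y x t)) has_derivative (\<lambda>r. DG (y x t) (r *\<^sub>R (x - x0)))) (at t within {0..1})"
            by (rule has_derivative_compose[OF l D[OF yS[OF xS t']]])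
          then have "(F has_derivative (\<lambda>r. r * (G (y x t) \<bullet> h) + t * (DG (y x t) (r *\<^sub>R (x - x0)) \<bullet> h))) (at t within {0..1})"
            unfolding F_def by (auto intro!: derivative_eq_intros)
          then show ?thesis unfolding has_vector_derivative_def
            apply (rule has_derivative_eq_rhs)
            apply (rule ext)
            using Sym[OF yS[OF xS t'], of h "x - x0"]
            by (simp add: fx_def blinfun.add_left blinfun.scaleR_left blinfun.scaleR_right inner_commute; simp add: algebra_simps)
        qed
        have "((\<lambda>t. fx x t h) has_integral (F 1 - F 0)) {0..1}"
          by (rule fundamental_theorem_of_calculus[OF _ Fd]) auto
        moreover have "F 1 - F 0 = G x \<bullet> h" by (simp add: F_def y_def)
        ultimately show "((\<lambda>t. fx x t h) has_integral G x \<bullet> h) (cbox 0 1)" by simp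
      qed
      finally show ?thesis .
    qed
    have "(\<Phi> has_derivative blinfun_apply (integral (cbox 0 1) (fx x))) (at x)"
      using L at_within_open[OF xS oS] by simp
    then show ?thesis
      apply (rule has_derivative_eq_rhs)
      apply (rule ext)
      apply (rule val)
      done
  qed
  then show ?thesis by blast
qed

definition dth :: "real \<Rightarrow> real \<Rightarrow> real \<Rightarrow> real \<Rightarrow> real \<Rightarrow> real \<Rightarrow> real" where
  "dth ya yb yc ha hb hc = (2*(ya+1)*(hb+hc) - (yc + ya*yb)/(yb^2-1) * (2*(yb+1)*(hc+ha))
      - (yb + ya*yc)/(yc^2-1) * (2*(yc+1)*(ha+hb))) / sqrt (Dl ya yb yc)"

definition bil where
  "bil y0 y1 y2 k0 k1 k2 h0 h1 h2 = k0 * dth y0 y1 y2 h0 h1 h2 + k1 * dth y1 y2 y0 h1 h2 h0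
     + k2 * dth y2 y0 y1 h2 h0 h1"

lemma Dl_rot: "Dl b c a = Dl a b c" unfolding Dl_def by (simp add: algebra_simps)

lemma dth_num:
  assumes "ya > 1" "yb > 1" "yc > 1"
  shows "dth ya yb yc ha hb hc * sqrt (Dl ya yb yc) =
    2*(ya+1)*(hb+hc) - 2*(yc + ya*yb)/(yb-1) * (hc+ha) - 2*(yb + ya*yc)/(yc-1) * (ha+hb)"
proof -
  have "sqrt (Dl ya yb yc) > 0" using Dl_pos[OF assms] by simp
  moreover have "(yc + ya*yb)/(yb^2-1) * (2*(yb+1)*(hc+ha)) = 2*(yc + ya*yb)/(yb-1) * (hc+ha)"
  proof -
    have e: "yb^2-1 = (yb-1)*(yb+1)" by (simp add: power2_eq_square algebra_simps)
    have "yb - 1 \<noteq> 0" "yb + 1 \<noteq> 0" "yb * yb - 1 \<noteq> 0" using assms by (auto simp: e[unfolded power2_eq_square])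
    then show ?thesis by (simp add: field_simps power2_eq_square; simp add: algebra_simps)
  qed
  moreover have "(yb + ya*yc)/(yc^2-1) * (2*(yc+1)*(ha+hb)) = 2*(yb + ya*yc)/(yc-1) * (ha+hb)"
  proof -
    have e: "yc^2-1 = (yc-1)*(yc+1)" by (simp add: power2_eq_square algebra_simps)
    have "yc - 1 \<noteq> 0" "yc + 1 \<noteq> 0" "yc * yc - 1 \<noteq> 0" using assms by (auto simp: e[unfolded power2_eq_square])
    then show ?thesis by (simp add: field_simps power2_eq_square; simp add: algebra_simps)
  qed
  ultimately show ?thesis unfolding dth_def by simp
qed

lemma bil_num:
  assumes "y0 > 1" "y1 > 1" "y2 > 1"
  shows "bil y0 y1 y2 k0 k1 k2 h0 h1 h2 * sqrt (Dl y0 y1 y2) =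
     k0 * (2*(y0+1)*(h1+h2) - 2*(y2 + y0*y1)/(y1-1) * (h2+h0) - 2*(y1 + y0*y2)/(y2-1) * (h0+h1))
   + k1 * (2*(y1+1)*(h2+h0) - 2*(y0 + y1*y2)/(y2-1) * (h0+h1) - 2*(y2 + y1*y0)/(y0-1) * (h1+h2))
   + k2 * (2*(y2+1)*(h0+h1) - 2*(y1 + y2*y0)/(y0-1) * (h1+h2) - 2*(y0 + y2*y1)/(y1-1) * (h2+h0))"
proof -
  have r1: "Dl y1 y2 y0 = Dl y0 y1 y2" "Dl y2 y0 y1 = Dl y0 y1 y2" using Dl_rot by metis+
  show ?thesis
    unfolding bil_def distrib_right mult.assoc[symmetric]
    using dth_num[OF assms(1,2,3), of h0 h1 h2] dth_num[OF assms(2,3,1), of h1 h2 h0]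
      dth_num[OF assms(3,1,2), of h2 h0 h1] unfolding r1 by (simp add: mult.assoc)
qed

lemma bil_sym:
  assumes "y0 > 1" "y1 > 1" "y2 > 1"
  shows "bil y0 y1 y2 k0 k1 k2 h0 h1 h2 = bil y0 y1 y2 h0 h1 h2 k0 k1 k2"
proof -
  have R: "sqrt (Dl y0 y1 y2) > 0" using Dl_pos[OF assms] by simp
  have "bil y0 y1 y2 k0 k1 k2 h0 h1 h2 * sqrt (Dl y0 y1 y2) = bil y0 y1 y2 h0 h1 h2 k0 k1 k2 * sqrt (Dl y0 y1 y2)"
  proof -
    define p0 where "p0 = y0 - 1" define p1 where "p1 = y1 - 1" define p2 where "p2 = y2 - 1"
    have pp: "p0 > 0" "p1 > 0" "p2 > 0" using assms by (auto simp: p0_def p1_def p2_def)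
    have y: "y0 = p0 + 1" "y1 = p1 + 1" "y2 = p2 + 1" by (auto simp: p0_def p1_def p2_def)
    show ?thesis unfolding bil_num[OF assms] unfolding y using pp by (simp add: field_simps)
  qed
  then show ?thesis using R by simp
qed

lemma bil_nsd:
  assumes "y0 > 1" "y1 > 1" "y2 > 1"
  shows "bil y0 y1 y2 h0 h1 h2 h0 h1 h2 \<le> 0"
proof -
  have R: "sqrt (Dl y0 y1 y2) > 0" using Dl_pos[OF assms] by simp
  define p0 where "p0 = y0 - 1" define p1 where "p1 = y1 - 1" define p2 where "p2 = y2 - 1"
  have pp: "p0 > 0" "p1 > 0" "p2 > 0" using assms by (auto simp: p0_def p1_def p2_def)
  have y: "y0 = p0 + 1" "y1 = p1 + 1" "y2 = p2 + 1" by (auto simp: p0_def p1_def p2_def)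
  define z0 where "z0 = h1 + h2" define z1 where "z1 = h2 + h0" define z2 where "z2 = h0 + h1"
  define s where "s = p0 + p1 + p2"
  define RHS where "RHS = (2 + s/2) * (z0^2/p0 + z1^2/p1 + z2^2/p2)
     + (1/2) * ((p0*z1 - p1*z0)^2/(p0*p1) + (p0*z2 - p2*z0)^2/(p0*p2) + (p1*z2 - p2*z1)^2/(p1*p2))
     + 2 * (h0^2 + h1^2 + h2^2) + 2 * (p0*h0^2 + p1*h1^2 + p2*h2^2)"
  have "RHS \<ge> 0" unfolding RHS_def s_def using pp
    by (intro add_nonneg_nonneg mult_nonneg_nonneg divide_nonneg_pos) auto
  moreover have "bil y0 y1 y2 h0 h1 h2 h0 h1 h2 * sqrt (Dl y0 y1 y2) = -2 * RHS"
    unfolding bil_num[OF assms] unfolding RHS_def s_def z0_def z1_def z2_def y using pp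
    by (simp add: field_simps) algebra
  ultimately have "bil y0 y1 y2 h0 h1 h2 h0 h1 h2 * sqrt (Dl y0 y1 y2) \<le> 0" by simp
  then show ?thesis using R by (simp add: mult_le_0_iff)
qed

definition Ye :: "('e \<Rightarrow> 'v \<times> 'v) \<Rightarrow> ('e \<Rightarrow> real) \<Rightarrow> 'e \<Rightarrow> real^'v \<Rightarrow> real" where
  "Ye ep l0 e w = 2 * (exp (w $ fst (ep e) + w $ snd (ep e)) * cosh (l0 e / 2))^2 - 1"

lemma pair_sum_eq:
  assumes "{p, q} = {r, s}" shows "(g p :: real) + g q = g r + g s"
  using assms by (auto simp: doubleton_eq_iff)

lemma adm_iff:
  "w \<in> adm_set E ep l0 \<longleftrightarrow> (\<forall>e\<in>E. w $ fst (ep e) + w $ snd (ep e) > - ln (cosh (l0 e / 2)))"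
proof -
  have "exp a * cosh (l0 e / 2) > 1 \<longleftrightarrow> a > - ln (cosh (l0 e / 2))" for a e
  proof -
    have c: "cosh (l0 e / 2) > 0" using cosh_real_ge_1[of "l0 e / 2"] by linarith
    have "exp a * cosh (l0 e / 2) > 1 \<longleftrightarrow> ln (exp a * cosh (l0 e / 2)) > 0"
      using c by (simp add: ln_gt_zero_iff)
    also have "\<dots> \<longleftrightarrow> a + ln (cosh (l0 e / 2)) > 0" using c by (simp add: ln_mult)
    finally show ?thesis by linarith
  qed
  then show ?thesis unfolding adm_set_def by auto
qed

lemma adm_open: "finite E \<Longrightarrow> open (adm_set E ep l0)"
proof -
  assume fE: "finite E"
  have "adm_set E ep l0 = (\<Inter>e\<in>E. {w. exp (w $ fst (ep e) + w $ snd (ep e)) * cosh (l0 e / 2) > 1})"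
    unfolding adm_set_def by auto
  also have "open \<dots>"
    by (intro open_INT fE ballI open_Collect_less continuous_intros)
  finally show ?thesis .
qed

lemma adm_convex: "convex (adm_set E ep l0)"
proof (rule convexI)
  fix x y :: "real^'a" and u v :: real
  assume x0: "x \<in> adm_set E ep l0" and y0: "y \<in> adm_set E ep l0"
    and u0: "0 \<le> u" and v0: "0 \<le> v" and s1: "u + v = 1"
  have x: "\<forall>e\<in>E. - ln (cosh (l0 e / 2)) < x $ fst (ep e) + x $ snd (ep e)"
    and y: "\<forall>e\<in>E. - ln (cosh (l0 e / 2)) < y $ fst (ep e) + y $ snd (ep e)"
    using x0 y0 by (auto simp: adm_iff)
  have uv: "0 \<le> u \<and> 0 \<le> v \<and> u + v = 1" using u0 v0 s1 by simp
  show "u *\<^sub>R x + v *\<^sub>R y \<in> adm_set E ep l0" unfolding adm_iff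
  proof
  fix e assume e: "e \<in> E"
  let ?L = "- ln (cosh (l0 e / 2))"
  have ax: "?L < x $ fst (ep e) + x $ snd (ep e)" and ay: "?L < y $ fst (ep e) + y $ snd (ep e)"
    using x y e by auto
  have "(u *\<^sub>R x + v *\<^sub>R y) $ fst (ep e) + (u *\<^sub>R x + v *\<^sub>R y) $ snd (ep e)
      = u * (x $ fst (ep e) + x $ snd (ep e)) + v * (y $ fst (ep e) + y $ snd (ep e))"
    by (simp add: algebra_simps)
  moreover have "u * (x $ fst (ep e) + x $ snd (ep e)) + v * (y $ fst (ep e) + y $ snd (ep e)) > u * ?L + v * ?L"
  proof (cases "u = 0")
    case True then show ?thesis using uv ay by simp
  next
    case False
    then have "u > 0" using uv by simp
    then have "u * (x $ fst (ep e) + x $ snd (ep e)) > u * ?L" by (rule mult_strict_left_mono[OF ax])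
    moreover have "v * (y $ fst (ep e) + y $ snd (ep e)) \<ge> v * ?L" using ay uv
      by (intro mult_left_mono) auto
    ultimately show ?thesis by linarith
  qed
  moreover have "u * ?L + v * ?L = (u + v) * ?L" by (rule distrib_right[symmetric])
  then have "u * ?L + v * ?L = ?L" using uv by simp
  ultimately show "?L < (u *\<^sub>R x + v *\<^sub>R y) $ fst (ep e) + (u *\<^sub>R x + v *\<^sub>R y) $ snd (ep e)"
    by linarith
  qed
qed

lemma adm_ne: "(\<chi> i. 1) \<in> adm_set E ep l0"
proof -
  have "exp 2 * cosh (l0 e / 2) > 1" for e
  proof -
    have "exp (2::real) > 1" by simp
    moreover have "cosh (l0 e / 2) \<ge> 1" by (rule cosh_real_ge_1)
    moreover have "exp (2::real) * 1 \<le> exp 2 * cosh (l0 e / 2)"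
      by (rule mult_left_mono) (auto simp: cosh_real_ge_1)
    ultimately show ?thesis by linarith
  qed
  then show ?thesis unfolding adm_set_def by simp
qed

lemma Ye_gt1:
  assumes "w \<in> adm_set E ep l0" "e \<in> E" shows "Ye ep l0 e w > 1"
proof -
  let ?x = "exp (w $ fst (ep e) + w $ snd (ep e)) * cosh (l0 e / 2)"
  have "?x > 1" using assms unfolding adm_set_def by auto
  then have "?x^2 > 1" by (simp add: one_less_power)
  then show ?thesis unfolding Ye_def by linarith
qed

lemma vec_nth_deriv[derivative_intros]: "((\<lambda>x. x $ i) has_derivative (\<lambda>h. h $ i)) F"
  by (rule bounded_linear_imp_has_derivative[OF bounded_linear_vec_nth])

lemma Ye_deriv:
  "(Ye ep l0 e has_derivative (\<lambda>h. 2 * (Ye ep l0 e w + 1) * (h $ fst (ep e) + h $ snd (ep e)))) (at w)"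
  unfolding Ye_def
  apply (rule has_derivative_eq_rhs)
   apply (rule derivative_eq_intros refl)+
  apply (simp add: fun_eq_iff power2_eq_square field_simps)
  done

lemma Ye_cont: "continuous_on S (Ye ep l0 e)"
  unfolding Ye_def by (intro continuous_intros)

lemma conf_len_facts:
  assumes "w \<in> adm_set E ep l0" "e \<in> E"
  shows "cosh (conf_len ep l0 w e) = Ye ep l0 e w" "sinh (conf_len ep l0 w e) = sqrt ((Ye ep l0 e w)^2 - 1)"
proof -
  let ?x = "exp (w $ fst (ep e) + w $ snd (ep e)) * cosh (l0 e / 2)"
  have x: "?x > 1" using assms unfolding adm_set_def by auto
  show c: "cosh (conf_len ep l0 w e) = Ye ep l0 e w"
    unfolding conf_len_def Ye_def cosh_double_cosh using x by simp
  have nn: "conf_len ep l0 w e \<ge> 0" unfolding conf_len_def using x by simp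
  have "sinh (conf_len ep l0 w e) ^2 = (Ye ep l0 e w)^2 - 1" by (metis sinh_square_eq c)
  then show "sinh (conf_len ep l0 w e) = sqrt ((Ye ep l0 e w)^2 - 1)"
    using nn by (metis real_sqrt_unique sinh_real_nonneg_iff)
qed

lemma tri_edge:
  assumes tri: "ideal_triangulation E F ep fv fe" and f: "f \<in> F" and a: "a < 3"
  shows "fe f a \<in> E"
    "\<And>w::real^'v. w $ fst (ep (fe f a)) + w $ snd (ep (fe f a)) = w $ fv f ((a+1) mod 3) + w $ fv f ((a+2) mod 3)"
proof -
  have "fe f a \<in> E \<and> {fst (ep (fe f a)), snd (ep (fe f a))} = {fv f ((a+1) mod 3), fv f ((a+2) mod 3)}"
    using tri f a unfolding ideal_triangulation_def by blast
  then show "fe f a \<in> E" "\<And>w::real^'v. w $ fst (ep (fe f a)) + w $ snd (ep (fe f a)) = w $ fv f ((a+1) mod 3) + w $ fv f ((a+2) mod 3)"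
    using pair_sum_eq[of _ _ _ _ "\<lambda>i. w $ i" for w] by blast+
qed

lemma mod3:
  assumes "a < (3::nat)"
  shows "((a+1) mod 3 + 1) mod 3 = (a+2) mod 3" "((a+1) mod 3 + 2) mod 3 = a"
    "((a+2) mod 3 + 1) mod 3 = a" "((a+2) mod 3 + 2) mod 3 = (a+1) mod 3"
    "(a+1) mod 3 < 3" "(a+2) mod 3 < 3"
proof -
  have "a = 0 \<or> a = 1 \<or> a = 2" using assms by linarith
  then show "((a+1) mod 3 + 1) mod 3 = (a+2) mod 3" "((a+1) mod 3 + 2) mod 3 = a"
    "((a+2) mod 3 + 1) mod 3 = a" "((a+2) mod 3 + 2) mod 3 = (a+1) mod 3"
    "(a+1) mod 3 < 3" "(a+2) mod 3 < 3" by auto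
qed

lemma fth_eq:
  assumes tri: "ideal_triangulation E F ep fv fe" and f: "f \<in> F" and a: "a < 3"
    and w: "w \<in> adm_set E ep l0"
  shows "face_theta fe (conf_len ep l0 w) f a =
    hth (Ye ep l0 (fe f a) w) (Ye ep l0 (fe f ((a+1) mod 3)) w) (Ye ep l0 (fe f ((a+2) mod 3)) w)"
proof -
  have e: "fe f a \<in> E" "fe f ((a+1) mod 3) \<in> E" "fe f ((a+2) mod 3) \<in> E"
    using tri_edge(1)[OF tri f] a mod3[OF a] by auto
  show ?thesis
    unfolding face_theta_def hex_opp_def hth_def conf_len_facts[OF w e(1)] conf_len_facts[OF w e(2)]
      conf_len_facts[OF w e(3)] ..
qed

lemma Yv_deriv:
  assumes tri: "ideal_triangulation E F ep fv fe" and f: "f \<in> F" and c: "c < 3"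
  shows "(Ye ep l0 (fe f c) has_derivative
    (\<lambda>h. 2 * (Ye ep l0 (fe f c) w + 1) * (h $ fv f ((c+1) mod 3) + h $ fv f ((c+2) mod 3)))) (at w)"
  using Ye_deriv[of ep l0 "fe f c" w] unfolding tri_edge(2)[OF tri f c] .

lemma fth_deriv:
  assumes tri: "ideal_triangulation E F ep fv fe" and f: "f \<in> F" and a: "a < 3"
    and w: "w \<in> adm_set E ep l0"
  shows "((\<lambda>w. face_theta fe (conf_len ep l0 w) f a) has_derivative
    (\<lambda>h. dth (Ye ep l0 (fe f a) w) (Ye ep l0 (fe f ((a+1) mod 3)) w) (Ye ep l0 (fe f ((a+2) mod 3)) w)
         (h $ fv f a) (h $ fv f ((a+1) mod 3)) (h $ fv f ((a+2) mod 3)))) (at w)"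
proof -
  have fE: "finite E" using tri unfolding ideal_triangulation_def by simp
  have e: "fe f a \<in> E" "fe f ((a+1) mod 3) \<in> E" "fe f ((a+2) mod 3) \<in> E"
    using tri_edge(1)[OF tri f] a mod3[OF a] by auto
  note d0 = Yv_deriv[OF tri f a, of l0 w]
  note d1 = Yv_deriv[OF tri f mod3(5)[OF a], of l0 w, unfolded mod3[OF a]]
  note d2 = Yv_deriv[OF tri f mod3(6)[OF a], of l0 w, unfolded mod3[OF a]]
  note H = hth_deriv[OF d0 d1 d2 Ye_gt1[OF w e(1)] Ye_gt1[OF w e(2)] Ye_gt1[OF w e(3)]]
  show ?thesis
    apply (rule has_derivative_transform_within_open[OF _ adm_open[OF fE] w])
     apply (rule has_derivative_eq_rhs[OF H])
     apply (unfold dth_def, rule refl)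
    apply (rule fth_eq[OF tri f a, symmetric], assumption)
    done
qed

definition Eb :: "'v::finite \<Rightarrow> 'v \<Rightarrow> ((real^'v) \<Rightarrow>\<^sub>L (real^'v))" where
  "Eb i j = blinfun_scaleR_left (axis i 1) o\<^sub>L blinfun_inner_left (axis j 1)"

lemma Eb_apply: "blinfun_apply (Eb i j) h = (h $ j) *\<^sub>R axis i 1"
  by (simp add: Eb_def inner_axis)

definition cA :: "real \<Rightarrow> real \<Rightarrow> real \<Rightarrow> real" where
  "cA ya yb yc = (- ((yc + ya*yb)/(yb^2-1) * (2*(yb+1))) - (yb + ya*yc)/(yc^2-1) * (2*(yc+1))) / sqrt (Dl ya yb yc)"
definition cB :: "real \<Rightarrow> real \<Rightarrow> real \<Rightarrow> real" where
  "cB ya yb yc = (2*(ya+1) - (yb + ya*yc)/(yc^2-1) * (2*(yc+1))) / sqrt (Dl ya yb yc)"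
definition cC :: "real \<Rightarrow> real \<Rightarrow> real \<Rightarrow> real" where
  "cC ya yb yc = (2*(ya+1) - (yc + ya*yb)/(yb^2-1) * (2*(yb+1))) / sqrt (Dl ya yb yc)"

lemma dth_lin: "dth ya yb yc ha hb hc = cA ya yb yc * ha + cB ya yb yc * hb + cC ya yb yc * hc"
  unfolding dth_def cA_def cB_def cC_def
  by (simp add: add_divide_distrib diff_divide_distrib algebra_simps)

lemma gt1_facts: "(y::real) > 1 \<Longrightarrow> y^2 - 1 \<noteq> 0"
proof -
  assume "y > 1"
  then have "y^2 > 1" using one_less_power[of y 2] by simp
  then show ?thesis by simp
qed

lemma cABC_cont:
  assumes c: "continuous_on S Y0" "continuous_on S Y1" "continuous_on S Y2"
    and g: "\<And>w. w \<in> S \<Longrightarrow> Y0 w > 1 \<and> Y1 w > 1 \<and> Y2 w > 1"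
  shows "continuous_on S (\<lambda>w. cA (Y0 w) (Y1 w) (Y2 w))" "continuous_on S (\<lambda>w. cB (Y0 w) (Y1 w) (Y2 w))"
    "continuous_on S (\<lambda>w. cC (Y0 w) (Y1 w) (Y2 w))"
proof -
  have n1: "\<forall>w\<in>S. (Y1 w)^2 - 1 \<noteq> 0" "\<forall>w\<in>S. (Y2 w)^2 - 1 \<noteq> 0"
    using g gt1_facts by blast+
  have n2: "\<forall>w\<in>S. sqrt (Dl (Y0 w) (Y1 w) (Y2 w)) \<noteq> 0"
    using g Dl_pos by (metis less_irrefl real_sqrt_eq_zero_cancel_iff)
  show "continuous_on S (\<lambda>w. cA (Y0 w) (Y1 w) (Y2 w))" unfolding cA_def Dl_def
    by (intro continuous_intros c n1 n2[unfolded Dl_def])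
  show "continuous_on S (\<lambda>w. cB (Y0 w) (Y1 w) (Y2 w))" unfolding cB_def Dl_def
    by (intro continuous_intros c n1 n2[unfolded Dl_def])
  show "continuous_on S (\<lambda>w. cC (Y0 w) (Y1 w) (Y2 w))" unfolding cC_def Dl_def
    by (intro continuous_intros c n1 n2[unfolded Dl_def])
qed

definition DGm :: "'f set \<Rightarrow> ('e \<Rightarrow> 'v::finite \<times> 'v) \<Rightarrow> ('f \<Rightarrow> nat \<Rightarrow> 'v) \<Rightarrow> ('f \<Rightarrow> nat \<Rightarrow> 'e)
   \<Rightarrow> ('e \<Rightarrow> real) \<Rightarrow> real^'v \<Rightarrow> ((real^'v) \<Rightarrow>\<^sub>L (real^'v))" where
  "DGm F ep fv fe l0 w = (\<Sum>f\<in>F. \<Sum>a<3.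
     cA (Ye ep l0 (fe f a) w) (Ye ep l0 (fe f ((a+1) mod 3)) w) (Ye ep l0 (fe f ((a+2) mod 3)) w) *\<^sub>R Eb (fv f a) (fv f a)
   + cB (Ye ep l0 (fe f a) w) (Ye ep l0 (fe f ((a+1) mod 3)) w) (Ye ep l0 (fe f ((a+2) mod 3)) w) *\<^sub>R Eb (fv f a) (fv f ((a+1) mod 3))
   + cC (Ye ep l0 (fe f a) w) (Ye ep l0 (fe f ((a+1) mod 3)) w) (Ye ep l0 (fe f ((a+2) mod 3)) w) *\<^sub>R Eb (fv f a) (fv f ((a+2) mod 3)))"

lemma DGm_apply:
  fixes fe :: "'f \<Rightarrow> nat \<Rightarrow> 'e"
  shows "blinfun_apply (DGm F ep fv fe l0 w) h = (\<Sum>f\<in>F. \<Sum>a<3.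
     dth (Ye ep l0 (fe f a) w) (Ye ep l0 (fe f ((a+1) mod 3)) w) (Ye ep l0 (fe f ((a+2) mod 3)) w)
       (h $ fv f a) (h $ fv f ((a+1) mod 3)) (h $ fv f ((a+2) mod 3)) *\<^sub>R axis (fv f a) 1)"
  unfolding DGm_def blinfun.sum_left blinfun.add_left blinfun.scaleR_left Eb_apply dth_lin
  by (simp add: scaleR_add_left)

lemma DGm_cont:
  assumes tri: "ideal_triangulation E F ep fv fe"
  shows "continuous_on (adm_set E ep l0) (DGm F ep fv fe l0)"
proof -
  have g: "Ye ep l0 (fe f a) w > 1 \<and> Ye ep l0 (fe f ((a+1) mod 3)) w > 1 \<and> Ye ep l0 (fe f ((a+2) mod 3)) w > 1"
    if "f \<in> F" "a < 3" "w \<in> adm_set E ep l0" for f a w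
  proof -
    have e: "fe f a \<in> E" "fe f ((a+1) mod 3) \<in> E" "fe f ((a+2) mod 3) \<in> E"
      using tri_edge(1)[OF tri that(1)] that(2) mod3(5,6)[OF that(2)] by auto
    show ?thesis using Ye_gt1[OF that(3) e(1)] Ye_gt1[OF that(3) e(2)] Ye_gt1[OF that(3) e(3)] by simp
  qed
  have ca: "continuous_on (adm_set E ep l0) (\<lambda>w. cA (Ye ep l0 (fe f a) w) (Ye ep l0 (fe f ((a+1) mod 3)) w) (Ye ep l0 (fe f ((a+2) mod 3)) w))"
     "continuous_on (adm_set E ep l0) (\<lambda>w. cB (Ye ep l0 (fe f a) w) (Ye ep l0 (fe f ((a+1) mod 3)) w) (Ye ep l0 (fe f ((a+2) mod 3)) w))"
     "continuous_on (adm_set E ep l0) (\<lambda>w. cC (Ye ep l0 (fe f a) w) (Ye ep l0 (fe f ((a+1) mod 3)) w) (Ye ep l0 (fe f ((a+2) mod 3)) w))"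
    if "f \<in> F" "a < 3" for f a
    using cABC_cont[OF Ye_cont Ye_cont Ye_cont g[OF that]] by blast+
  show ?thesis unfolding DGm_def
    by (intro continuous_on_sum continuous_on_add continuous_on_scaleR continuous_on_const ca) auto
qed

lemma Bvec_sum:
  assumes "finite F"
  shows "Bvec F ep fv fe l0 w = (\<Sum>f\<in>F. \<Sum>a<3. face_theta fe (conf_len ep l0 w) f a *\<^sub>R axis (fv f a) 1)"
unfolding vec_eq_iff
proof
  fix i
  have ss: "sum g {a. a < 3 \<and> fv f a = i} = (\<Sum>a<3. if i = fv f a then g a else 0)" for f and g :: "nat \<Rightarrow> real"
  proof -
    have e: "{a. a < 3 \<and> fv f a = i} = {a \<in> {..<3}. i = fv f a}" by auto
    show ?thesis unfolding e by (rule sum.inter_filter) simp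
  qed
  show "Bvec F ep fv fe l0 w $ i = (\<Sum>f\<in>F. \<Sum>a<3. face_theta fe (conf_len ep l0 w) f a *\<^sub>R axis (fv f a) 1) $ i"
    unfolding Bvec_def bdry_len_def
    by (simp add: ss axis_def if_distrib cong: if_cong)
qed

lemma G_deriv:
  assumes tri: "ideal_triangulation E F ep fv fe" and w: "w \<in> adm_set E ep l0"
  shows "(Bvec F ep fv fe l0 has_derivative blinfun_apply (DGm F ep fv fe l0 w)) (at w)"
proof -
  have fF: "finite F" using tri unfolding ideal_triangulation_def by simp
  have eq: "Bvec F ep fv fe l0 = (\<lambda>w. \<Sum>f\<in>F. \<Sum>a<3. face_theta fe (conf_len ep l0 w) f a *\<^sub>R axis (fv f a) 1)"
    by (rule ext) (rule Bvec_sum[OF fF])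
  have "((\<lambda>w. \<Sum>f\<in>F. \<Sum>a<3. face_theta fe (conf_len ep l0 w) f a *\<^sub>R axis (fv f a) 1) has_derivative
    (\<lambda>h. \<Sum>f\<in>F. \<Sum>a<3.
     dth (Ye ep l0 (fe f a) w) (Ye ep l0 (fe f ((a+1) mod 3)) w) (Ye ep l0 (fe f ((a+2) mod 3)) w)
       (h $ fv f a) (h $ fv f ((a+1) mod 3)) (h $ fv f ((a+2) mod 3)) *\<^sub>R axis (fv f a) 1)) (at w)"
    apply (intro has_derivative_sum)
    apply (rule has_derivative_scaleR_left)
    apply (rule fth_deriv[OF tri _ _ w])
     apply auto
    done
  then show ?thesis unfolding eq
    by (rule has_derivative_eq_rhs) (simp add: fun_eq_iff DGm_apply)
qed

lemma sum3: "(\<Sum>a<(3::nat). g a) = g 0 + g 1 + (g 2 :: real)"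
  by (simp add: numeral_3_eq_3 lessThan_Suc numeral_2_eq_2)

lemma DG_inner:
  fixes fe :: "'f \<Rightarrow> nat \<Rightarrow> 'e"
  shows "blinfun_apply (DGm F ep fv fe l0 w) h \<bullet> k = (\<Sum>f\<in>F.
     bil (Ye ep l0 (fe f 0) w) (Ye ep l0 (fe f 1) w) (Ye ep l0 (fe f 2) w)
       (k $ fv f 0) (k $ fv f 1) (k $ fv f 2) (h $ fv f 0) (h $ fv f 1) (h $ fv f 2))"
  unfolding DGm_apply inner_sum_left inner_scaleR_left inner_axis'
  by (simp add: sum3 bil_def algebra_simps numeral_2_eq_2)

lemma DG_facts:
  assumes tri: "ideal_triangulation E F ep fv fe" and w: "w \<in> adm_set E ep l0"
  shows "blinfun_apply (DGm F ep fv fe l0 w) h \<bullet> k = blinfun_apply (DGm F ep fv fe l0 w) k \<bullet> h"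
    "blinfun_apply (DGm F ep fv fe l0 w) h \<bullet> h \<le> 0"
proof -
  have g: "Ye ep l0 (fe f 0) w > 1" "Ye ep l0 (fe f 1) w > 1" "Ye ep l0 (fe f 2) w > 1" if "f \<in> F" for f
    using Ye_gt1[OF w tri_edge(1)[OF tri that]] by auto
  show "blinfun_apply (DGm F ep fv fe l0 w) h \<bullet> k = blinfun_apply (DGm F ep fv fe l0 w) k \<bullet> h"
    unfolding DG_inner by (rule sum.cong[OF refl]) (rule bil_sym[OF g])
  show "blinfun_apply (DGm F ep fv fe l0 w) h \<bullet> h \<le> 0"
    unfolding DG_inner by (rule sum_nonpos) (rule bil_nsd[OF g])
qed

theorem corollary2:
  fixes E :: "'e set" and F :: "'f set" and ep :: "'e \<Rightarrow> 'v::finite \<times> 'v"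
    and fv :: "'f \<Rightarrow> nat \<Rightarrow> 'v" and fe :: "'f \<Rightarrow> nat \<Rightarrow> 'e" and l0 :: "'e \<Rightarrow> real"
  assumes tri: "ideal_triangulation E F ep fv fe"
    and l0_pos: "\<forall>e\<in>E. l0 e > 0"
  shows "(\<exists>\<Phi> :: real^'v \<Rightarrow> real.
            concave_on (adm_set E ep l0) \<Phi> \<and>
            (\<forall>w\<in>adm_set E ep l0.
               (\<Phi> has_derivative (\<lambda>h. Bvec F ep fv fe l0 w \<bullet> h)) (at w)))
       \<and> (\<forall>(J :: real set) (wt :: real \<Rightarrow> real^'v).
            is_interval J \<and> 0 \<in> J \<and> wt 0 = 0 \<and>
            (\<forall>t\<in>J. wt t \<in> adm_set E ep l0 \<and>
                   (wt has_vector_derivative Bvec F ep fv fe l0 (wt t)) (at t within J))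
            \<longrightarrow> (\<forall>s\<in>J. \<forall>t\<in>J. s \<le> t \<longrightarrow>
                   (\<Sum>i\<in>UNIV. (Bvec F ep fv fe l0 (wt t) $ i)^2)
                     \<le> (\<Sum>i\<in>UNIV. (Bvec F ep fv fe l0 (wt s) $ i)^2)))"
proof -
  let ?S = "adm_set E ep l0"
  let ?G = "Bvec F ep fv fe l0"
  let ?DG = "DGm F ep fv fe l0"
  have fE: "finite E" using tri unfolding ideal_triangulation_def by simp
  have oS: "open ?S" by (rule adm_open[OF fE])
  have cS: "convex ?S" by (rule adm_convex)
  have x0: "(\<chi> i. 1) \<in> ?S" by (rule adm_ne)
  have D: "\<And>x. x \<in> ?S \<Longrightarrow> (?G has_derivative blinfun_apply (?DG x)) (at x)"
    by (rule G_deriv[OF tri])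
  have C: "continuous_on ?S ?DG" by (rule DGm_cont[OF tri])
  have Sym: "\<And>x h k. x \<in> ?S \<Longrightarrow> blinfun_apply (?DG x) h \<bullet> k = blinfun_apply (?DG x) k \<bullet> h"
    by (rule DG_facts(1)[OF tri])
  have N: "\<And>x h. x \<in> ?S \<Longrightarrow> blinfun_apply (?DG x) h \<bullet> h \<le> 0"
    by (rule DG_facts(2)[OF tri])
  obtain \<Phi> where \<Phi>: "\<forall>x\<in>?S. (\<Phi> has_derivative (\<lambda>h. ?G x \<bullet> h)) (at x)"
    using potential_exists[OF oS cS x0 D C Sym] by blast
  have M: "(?G x - ?G y) \<bullet> (x - y) \<le> 0" if "x \<in> ?S" "y \<in> ?S" for x y
    by (rule mono_from_nsd[of ?S ?G "\<lambda>x. blinfun_apply (?DG x)", OF cS D N that])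
  have conc: "concave_on ?S \<Phi>"
    by (rule concave_from_grad[OF cS]) (use \<Phi> M in auto)
  have sq: "(\<Sum>i\<in>UNIV. (v $ i)^2) = v \<bullet> v" for v :: "real^'v"
    by (simp add: inner_vec_def power2_eq_square)
  have P1: "\<exists>\<Phi> :: real^'v \<Rightarrow> real. concave_on ?S \<Phi> \<and> (\<forall>w\<in>?S. (\<Phi> has_derivative (\<lambda>h. ?G w \<bullet> h)) (at w))"
    using conc \<Phi> by blast
  have P2: "\<forall>(J :: real set) (wt :: real \<Rightarrow> real^'v).
            is_interval J \<and> 0 \<in> J \<and> wt 0 = 0 \<and>
            (\<forall>t\<in>J. wt t \<in> ?S \<and> (wt has_vector_derivative ?G (wt t)) (at t within J))
            \<longrightarrow> (\<forall>s\<in>J. \<forall>t\<in>J. s \<le> t \<longrightarrow>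
                   (\<Sum>i\<in>UNIV. (?G (wt t) $ i)^2) \<le> (\<Sum>i\<in>UNIV. (?G (wt s) $ i)^2))"
  proof (intro allI impI ballI)
    fix J :: "real set" and wt :: "real \<Rightarrow> real^'v" and s t
    assume H: "is_interval J \<and> 0 \<in> J \<and> wt 0 = 0 \<and>
            (\<forall>t\<in>J. wt t \<in> ?S \<and> (wt has_vector_derivative ?G (wt t)) (at t within J))"
      and s: "s \<in> J" and t: "t \<in> J" and st: "s \<le> t"
    show "(\<Sum>i\<in>UNIV. (?G (wt t) $ i)^2) \<le> (\<Sum>i\<in>UNIV. (?G (wt s) $ i)^2)"
      unfolding sq
      using flow_decr[of ?S ?G "\<lambda>x. blinfun_apply (?DG x)" J wt s t] D N H s t st by blast
  qed
  show ?thesis using P1 P2 by (rule conjI)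
qed

end
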